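(* Under the setting above, \begin{equation*} \sum_{k = 0}^{1 - a_{\eta\eta'}}(-1)^k\begin{bmatrix} 1 - a_{\eta\eta'} \\ k \end{bmatrix}_{d_{\eta}} \widetilde f_{\eta}^k\widetilde f_{\eta'} \widetilde f_{\eta}^{1-a_{\eta\eta'} - k} = 0 \end{equation*} in $\mathbf{U}_q^-$.
   Context: Let $X = (I, (\ ,\ ))$ be a Cartan datum with Cartan matrix $a_{ij} = 2(\alpha_i,\alpha_j)/(\alpha_i,\alpha_i)$, $d_i = (\alpha_i,\alpha_i)/2$, and let $\mathbf{U}_q^-$ be the $\mathbb{Q}(q)$-algebra generated by $f_i$ ($i \in I$) subject to the quantum Serre relations $\sum_{k=0}^{1-a_{ij}}(-1)^k\begin{bmatrix} 1 - a_{ij} \\ k\end{bmatrix}_{d_i} f_i^k f_j f_i^{1-a_{ij}-k} = 0$ ($i \ne j$), where $[n] = \frac{q^n - q^{-n}}{q - q^{-1}}$, $\begin{bmatrix} n \\ m\end{bmatrix} = \frac{[n]\cdots[n-m+1]}{[m]^!}$ and the subscript $d$ means $q$ is replaced by $q^d$. Let $\sigma$ be an admissible diagram automorphism of $X$ (a permutation of $I$ preserving $(\ ,\ )$ with $(\alpha_i,\alpha_j)=0$ for distinct $i,j$ in the same orbit), $\underline{I}$ the set of $\sigma$-orbits, and $\underline X$ the induced Cartan datum with $(\alpha_\eta,\alpha_\eta)_1 = (\alpha_i,\alpha_i)|\eta|$ ($i \in \eta$), $(\alpha_\eta,\alpha_{\eta'})_1 = \sum_{i\in\eta, j\in\eta'}(\alpha_i,\alpha_j)$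 for $\eta\ne\eta'$, $d_\eta = (\alpha_\eta,\alpha_\eta)_1/2$, $a_{\eta\eta'} = 2(\alpha_\eta,\alpha_{\eta'})_1/(\alpha_\eta,\alpha_\eta)_1$. Fix $\eta \ne \eta' \in \underline{I}$ with $\eta = \{i\}$ a single element and $|\eta'| = n-1$, such that every $j \in \eta'$ is joined to $i$ (i.e. $a_{ij} \ne 0$), with $a_{ij}$ independent of $j \in \eta'$; set $r = 1 - a_{ij}$, so $1 - a_{\eta\eta'} = (n-1)(r-1)+1$ and $d_\eta = d_i$. Put $\widetilde f_\eta = f_i$ and $\widetilde f_{\eta'} = \prod_{j \in \eta'} f_j$. *)

theory Defs
  imports "HOL-Library.Function_Algebras" "HOL-Computational_Algebra.Polynomial" "HOL-Computational_Algebra.Fraction_Field"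
begin

type_synonym Qq = "rat poly fract"

definition qv :: Qq where "qv = Fract [:0, 1:] 1"

definition qint :: "nat \<Rightarrow> nat \<Rightarrow> Qq" where
  "qint d n = (qv ^ (d * n) - inverse qv ^ (d * n)) / (qv ^ d - inverse qv ^ d)"

definition qfact :: "nat \<Rightarrow> nat \<Rightarrow> Qq" where
  "qfact d m = (\<Prod>l = 1..m. qint d l)"

definition qbinom :: "nat \<Rightarrow> nat \<Rightarrow> nat \<Rightarrow> Qq" where
  "qbinom d n m = (\<Prod>l = 0..<m. qint d (n - l)) / qfact d m"

text \<open>The symmetric bilinear form is given by its values B i j = (alpha_i, alpha_j).\<close>
definition cartan_datum :: "('i::finite \<Rightarrow> 'i \<Rightarrow> int) \<Rightarrow> bool" where
  "cartan_datum B \<longleftrightarrow> (\<forall>i j. B i j = B j i) \<and> (\<forall>i. B i i > 0 \<and> even (B i i))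
     \<and> (\<forall>i j. i \<noteq> j \<longrightarrow> B i j \<le> 0 \<and> B i i dvd 2 * B i j)"

definition cartan_a :: "('i \<Rightarrow> 'i \<Rightarrow> int) \<Rightarrow> 'i \<Rightarrow> 'i \<Rightarrow> int" where
  "cartan_a B i j = (2 * B i j) div B i i"

definition cartan_d :: "('i \<Rightarrow> 'i \<Rightarrow> int) \<Rightarrow> 'i \<Rightarrow> int" where
  "cartan_d B i = B i i div 2"

text \<open>Elements of the free algebra Q(q)<f_i> are represented as coefficient functions on
  words (finitely supported); the word [i1,...,im] stands for f_{i1} ... f_{im}.\<close>
type_synonym 'i ncp = "'i list \<Rightarrow> Qq"

definition mon :: "'i list \<Rightarrow> 'i ncp" where
  "mon w = (\<lambda>v. if v = w then 1 else 0)"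

definition smult_ncp :: "Qq \<Rightarrow> 'i ncp \<Rightarrow> 'i ncp" where
  "smult_ncp c p = (\<lambda>w. c * p w)"

definition lmul_word :: "'i list \<Rightarrow> 'i ncp \<Rightarrow> 'i ncp" where
  "lmul_word u p = (\<lambda>w. if take (length u) w = u then p (drop (length u) w) else 0)"

definition rmul_word :: "'i list \<Rightarrow> 'i ncp \<Rightarrow> 'i ncp" where
  "rmul_word v p = (\<lambda>w. if length v \<le> length w \<and> drop (length w - length v) w = v
                         then p (take (length w - length v) w) else 0)"

definition serre_elem :: "('i \<Rightarrow> 'i \<Rightarrow> int) \<Rightarrow> 'i \<Rightarrow> 'i \<Rightarrow> 'i ncp" where
  "serre_elem B i j =
     (let N = nat (1 - cartan_a B i j); d = nat (cartan_d B i) in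
      (\<Sum>k = 0..N. smult_ncp ((-1) ^ k * qbinom d N k)
                      (mon (replicate k i @ [j] @ replicate (N - k) i))))"

inductive_set serre_ideal :: "('i \<Rightarrow> 'i \<Rightarrow> int) \<Rightarrow> 'i ncp set" for B where
  gen: "i \<noteq> j \<Longrightarrow> serre_elem B i j \<in> serre_ideal B"
| zero: "(\<lambda>_. 0) \<in> serre_ideal B"
| add: "p \<in> serre_ideal B \<Longrightarrow> r \<in> serre_ideal B \<Longrightarrow> (\<lambda>w. p w + r w) \<in> serre_ideal B"
| smult: "p \<in> serre_ideal B \<Longrightarrow> smult_ncp c p \<in> serre_ideal B"
| lmul: "p \<in> serre_ideal B \<Longrightarrow> lmul_word u p \<in> serre_ideal B"
| rmul: "p \<in> serre_ideal B \<Longrightarrow> rmul_word v p \<in> serre_ideal B"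

definition zero_in_Uminus :: "('i \<Rightarrow> 'i \<Rightarrow> int) \<Rightarrow> 'i ncp \<Rightarrow> bool" where
  "zero_in_Uminus B p \<longleftrightarrow> p \<in> serre_ideal B"

definition admissible_aut :: "('i::finite \<Rightarrow> 'i \<Rightarrow> int) \<Rightarrow> ('i \<Rightarrow> 'i) \<Rightarrow> bool" where
  "admissible_aut B \<sigma> \<longleftrightarrow> bij \<sigma> \<and> (\<forall>i j. B (\<sigma> i) (\<sigma> j) = B i j)
     \<and> (\<forall>i k. (\<sigma> ^^ k) i \<noteq> i \<longrightarrow> B i ((\<sigma> ^^ k) i) = 0)"

definition sorbit :: "('i \<Rightarrow> 'i) \<Rightarrow> 'i \<Rightarrow> 'i set" where
  "sorbit \<sigma> i = {(\<sigma> ^^ k) i | k. True}"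

definition sorbits :: "('i \<Rightarrow> 'i) \<Rightarrow> 'i set set" where
  "sorbits \<sigma> = range (sorbit \<sigma>)"

definition B1 :: "('i \<Rightarrow> 'i \<Rightarrow> int) \<Rightarrow> 'i set \<Rightarrow> 'i set \<Rightarrow> int" where
  "B1 B \<eta> \<eta>' = (if \<eta> = \<eta>' then (let i = (SOME i. i \<in> \<eta>) in B i i * int (card \<eta>))
                   else (\<Sum>i\<in>\<eta>. \<Sum>j\<in>\<eta>'. B i j))"

definition d1 :: "('i \<Rightarrow> 'i \<Rightarrow> int) \<Rightarrow> 'i set \<Rightarrow> int" where
  "d1 B \<eta> = B1 B \<eta> \<eta> div 2"

definition a1 :: "('i \<Rightarrow> 'i \<Rightarrow> int) \<Rightarrow> 'i set \<Rightarrow> 'i set \<Rightarrow> int" where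
  "a1 B \<eta> \<eta>' = (2 * B1 B \<eta> \<eta>') div B1 B \<eta> \<eta>"

end

theory Submission
  imports Defs
begin

lemma sum_fun_apply: "(\<Sum>x\<in>A. f x) w = (\<Sum>x\<in>A. f x w)"
  by (induction A rule: infinite_finite_induct) auto

definition conv :: "'i ncp \<Rightarrow> 'i ncp \<Rightarrow> 'i ncp" where
  "conv p q = (\<lambda>w. \<Sum>k\<le>length w. p (take k w) * q (drop k w))"

lemma conv_assoc: "conv (conv p q) r = conv p (conv q r)"
proof
  fix w :: "'a list"
  define n where "n = length w"
  define g where "g = (\<lambda>l m. p (take l w) * q (take m (drop l w)) * r (drop (l+m) w))"
  have "conv (conv p q) r w = (\<Sum>k\<le>n. \<Sum>l\<le>k. g l (k - l))"
    unfolding conv_def n_def g_def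
    by (auto simp: sum_distrib_right min_def drop_take intro!: sum.cong)
  also have "\<dots> = (\<Sum>(l,m)\<in>{(l,m). l+m \<le> n}. g l m)"
    by (rule sum.triangle_reindex_eq[symmetric])
  also have "{(l,m). l+m \<le> n} = Sigma {..n} (\<lambda>l. {..n-l})" by auto
  also have "(\<Sum>(l,m)\<in>Sigma {..n} (\<lambda>l. {..n-l}). g l m) = (\<Sum>l\<le>n. \<Sum>m\<le>n-l. g l m)"
    by (rule sum.Sigma[symmetric]) auto
  also have "\<dots> = conv p (conv q r) w"
    unfolding conv_def n_def g_def
    by (auto simp: sum_distrib_left mult.assoc add.commute intro!: sum.cong)
  finally show "conv (conv p q) r w = conv p (conv q r) w" .
qed

typedef 'i fa = "UNIV :: 'i ncp set" morphisms rep abs by simp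
setup_lifting type_definition_fa

lemma conv_one_left: "conv (mon []) p = p"
proof
  fix w :: "'a list"
  have "conv (mon []) p w = (\<Sum>k\<le>length w. if k = 0 then p w else 0)"
    unfolding conv_def mon_def by (intro sum.cong) auto
  then show "conv (mon []) p w = p w" by simp
qed

lemma conv_one_right: "conv p (mon []) = p"
proof
  fix w :: "'a list"
  have "conv p (mon []) w = (\<Sum>k\<le>length w. if k = length w then p w else 0)"
    unfolding conv_def mon_def by (intro sum.cong) auto
  then show "conv p (mon []) w = p w" by simp
qed

instantiation fa :: (type) ring_1
begin
lift_definition zero_fa :: "'i fa" is "\<lambda>_. 0" .
lift_definition one_fa :: "'i fa" is "mon []" .
lift_definition plus_fa :: "'i fa \<Rightarrow> 'i fa \<Rightarrow> 'i fa" is "\<lambda>p q w. p w + q w" .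
lift_definition minus_fa :: "'i fa \<Rightarrow> 'i fa \<Rightarrow> 'i fa" is "\<lambda>p q w. p w - q w" .
lift_definition uminus_fa :: "'i fa \<Rightarrow> 'i fa" is "\<lambda>p w. - p w" .
lift_definition times_fa :: "'i fa \<Rightarrow> 'i fa \<Rightarrow> 'i fa" is conv .
instance
proof
  fix a b c :: "'i fa"
  show "a * b * c = a * (b * c)" by transfer (rule conv_assoc)
  show "a + b + c = a + (b + c)" by transfer (simp add: add.assoc)
  show "a + b = b + a" by transfer (simp add: add.commute)
  show "0 + a = a" by transfer simp
  show "- a + a = 0" by transfer simp
  show "a - b = a + - b" by transfer simp
  show "1 * a = a" by transfer (rule conv_one_left)
  show "a * 1 = a" by transfer (rule conv_one_right)
  show "(a + b) * c = a * c + b * c" by transfer (auto simp: conv_def distrib_right sum.distrib)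
  show "a * (b + c) = a * b + a * c" by transfer (auto simp: conv_def distrib_left sum.distrib)
  show "(0::'i fa) \<noteq> 1" by transfer (auto simp: mon_def fun_eq_iff)
qed
end


definition Cs :: "Qq \<Rightarrow> 'i fa" where "Cs c = abs (\<lambda>w. if w = [] then c else 0)"

lemma Cs_rep_eq: "rep (Cs c) = (\<lambda>w. if w = [] then c else 0)"
  unfolding Cs_def by (simp add: abs_inverse)

lemma rep_one: "rep 1 = mon []"
  by transfer simp

lemma rep_uminus: "rep (- p) = (\<lambda>w. - rep p w)"
  by transfer simp
lift_definition Wd :: "'i list \<Rightarrow> 'i fa" is mon .

lemma rep_plus: "rep (p + q) = (\<lambda>w. rep p w + rep q w)"
  by transfer simp

lemma rep_zero: "rep 0 = (\<lambda>_. 0)"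
  by transfer simp

lemma rep_sum: "rep (\<Sum>x\<in>A. f x) = (\<Sum>x\<in>A. rep (f x))"
  by (induction A rule: infinite_finite_induct) (auto simp: rep_zero rep_plus zero_fun_def plus_fun_def)

lemma rep_Wd: "rep (Wd u) = mon u"
  by transfer simp

lemma rep_Cs_mult: "rep (Cs c * p) = smult_ncp c (rep p)"
proof
  fix w :: "'a list"
  have "rep (Cs c * p) w = (\<Sum>k\<le>length w. if k = 0 then c * rep p w else 0)"
    unfolding times_fa.rep_eq conv_def Cs_rep_eq by (intro sum.cong) auto
  then show "rep (Cs c * p) w = smult_ncp c (rep p) w"
    by (simp add: smult_ncp_def)
qed

lemma rep_mult_Cs: "rep (p * Cs c) = smult_ncp c (rep p)"
proof
  fix w :: "'a list"
  have "rep (p * Cs c) w = (\<Sum>k\<le>length w. if k = length w then c * rep p w else 0)"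
    unfolding times_fa.rep_eq conv_def Cs_rep_eq by (intro sum.cong) (auto simp: mult.commute)
  then show "rep (p * Cs c) w = smult_ncp c (rep p) w"
    by (simp add: smult_ncp_def)
qed

lemma Cs_comm: "Cs c * p = p * Cs c"
  by (metis rep_Cs_mult rep_mult_Cs rep_inject)

lemma rep_Wd_mult: "rep (Wd u * p) = lmul_word u (rep p)"
proof transfer
  fix u and p :: "'a ncp"
  show "conv (mon u) p = lmul_word u p"
  proof
    fix w :: "'a list"
    have "conv (mon u) p w = (\<Sum>k\<le>length w. if k = length u then
           (if take (length u) w = u then p (drop (length u) w) else 0) else 0)"
      unfolding conv_def mon_def by (intro sum.cong) auto
    also have "\<dots> = lmul_word u p w"
      by (auto simp: lmul_word_def dest: arg_cong[of _ _ length])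
    finally show "conv (mon u) p w = lmul_word u p w" .
  qed
qed

lemma rep_mult_Wd: "rep (p * Wd v) = rmul_word v (rep p)"
proof transfer
  fix v and p :: "'a ncp"
  show "conv p (mon v) = rmul_word v p"
  proof
    fix w :: "'a list"
    have "conv p (mon v) w = (\<Sum>k\<le>length w. if k = length w - length v then
           (if length v \<le> length w \<and> drop (length w - length v) w = v then p (take (length w - length v) w) else 0) else 0)"
      unfolding conv_def mon_def by (intro sum.cong) auto
    also have "\<dots> = rmul_word v p w"
      by (auto simp: rmul_word_def)
    finally show "conv p (mon v) w = rmul_word v p w" .
  qed
qed

lemma Wd_append: "Wd (u @ v) = Wd u * Wd v"
  by (rule rep_inject[THEN iffD1]) (auto simp: rep_Wd_mult rep_Wd lmul_word_def mon_def fun_eq_iff, metis append_take_drop_id)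

lemma Wd_Nil: "Wd [] = 1"
  by transfer simp

lemma Cs_mult: "Cs (a * b) = Cs a * Cs b"
  by (rule rep_inject[THEN iffD1]) (auto simp: rep_Cs_mult smult_ncp_def fun_eq_iff Cs_rep_eq)

lemma Cs_add: "Cs (a + b) = Cs a + Cs b"
  by (rule rep_inject[THEN iffD1]) (auto simp: rep_plus Cs_rep_eq)

lemma Cs_one: "Cs 1 = 1"
  by (rule rep_inject[THEN iffD1]) (auto simp: rep_one Cs_rep_eq mon_def)

lemma Cs_zero: "Cs 0 = 0"
  by (rule rep_inject[THEN iffD1]) (auto simp: rep_zero Cs_rep_eq)

lemma Cs_uminus: "Cs (- a) = - Cs a"
  by (rule rep_inject[THEN iffD1]) (auto simp: rep_uminus Cs_rep_eq)


definition Iset :: "('i \<Rightarrow> 'i \<Rightarrow> int) \<Rightarrow> 'i fa set" where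
  "Iset B = {p. rep p \<in> serre_ideal B}"

inductive_set Poly :: "'i fa set" where
  Cs: "Cs c \<in> Poly"
| Wd: "Wd u \<in> Poly"
| add: "p \<in> Poly \<Longrightarrow> q \<in> Poly \<Longrightarrow> p + q \<in> Poly"
| mult: "p \<in> Poly \<Longrightarrow> q \<in> Poly \<Longrightarrow> p * q \<in> Poly"

lemma Poly_one: "1 \<in> Poly" by (metis Cs_one Poly.Cs)
lemma Poly_zero: "0 \<in> Poly" by (metis Cs_zero Poly.Cs)
lemma Poly_uminus: "p \<in> Poly \<Longrightarrow> - p \<in> Poly"
  by (metis Cs_one Cs_uminus Poly.Cs Poly.mult mult_minus_left mult_1)
lemma Poly_diff: "p \<in> Poly \<Longrightarrow> q \<in> Poly \<Longrightarrow> p - q \<in> Poly"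
  by (metis Poly.add Poly_uminus diff_conv_add_uminus)
lemma Poly_power: "p \<in> Poly \<Longrightarrow> p ^ n \<in> Poly"
  by (induction n) (auto intro: Poly_one Poly.mult)

lemma I_zero: "0 \<in> Iset B"
  by (simp add: Iset_def rep_zero serre_ideal.zero)
lemma I_add: "p \<in> Iset B \<Longrightarrow> q \<in> Iset B \<Longrightarrow> p + q \<in> Iset B"
  by (simp add: Iset_def rep_plus serre_ideal.add)
lemma I_Cs: "p \<in> Iset B \<Longrightarrow> Cs c * p \<in> Iset B"
  by (simp add: Iset_def rep_Cs_mult serre_ideal.smult)
lemma I_Cs_right: "p \<in> Iset B \<Longrightarrow> p * Cs c \<in> Iset B"
  by (simp add: Iset_def rep_mult_Cs serre_ideal.smult)
lemma I_Wd_left: "p \<in> Iset B \<Longrightarrow> Wd u * p \<in> Iset B"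
  by (simp add: Iset_def rep_Wd_mult serre_ideal.lmul)
lemma I_Wd_right: "p \<in> Iset B \<Longrightarrow> p * Wd u \<in> Iset B"
  by (simp add: Iset_def rep_mult_Wd serre_ideal.rmul)
lemma I_uminus: "p \<in> Iset B \<Longrightarrow> - p \<in> Iset B"
  by (metis Cs_one Cs_uminus I_Cs mult_minus_left mult_1)
lemma I_diff: "p \<in> Iset B \<Longrightarrow> q \<in> Iset B \<Longrightarrow> p - q \<in> Iset B"
  by (metis I_add I_uminus diff_conv_add_uminus)
lemma I_sum: "(\<And>x. x \<in> A \<Longrightarrow> f x \<in> Iset B) \<Longrightarrow> (\<Sum>x\<in>A. f x) \<in> Iset B"
  by (induction A rule: infinite_finite_induct) (auto intro: I_zero I_add)

lemma I_mult_right: "q \<in> Poly \<Longrightarrow> p \<in> Iset B \<Longrightarrow> p * q \<in> Iset B"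
proof (induction q arbitrary: p rule: Poly.induct)
  case (add q1 q2) then show ?case by (simp add: distrib_left I_add)
next
  case (mult q1 q2) then show ?case by (metis mult.assoc)
qed (auto intro: I_Cs_right I_Wd_right)

lemma I_mult_left: "q \<in> Poly \<Longrightarrow> p \<in> Iset B \<Longrightarrow> q * p \<in> Iset B"
proof (induction q arbitrary: p rule: Poly.induct)
  case (add q1 q2) then show ?case by (simp add: distrib_right I_add)
next
  case (mult q1 q2) then show ?case by (metis mult.assoc)
qed (auto intro: I_Cs I_Wd_left)

section \<open>q-adjoint operator\<close>

definition Aop :: "Qq \<Rightarrow> 'i fa \<Rightarrow> int \<Rightarrow> 'i fa \<Rightarrow> 'i fa" where
  "Aop w Y c p = p * Y - Cs (w powi c) * Y * p"

primrec Aiter :: "Qq \<Rightarrow> 'i fa \<Rightarrow> int \<Rightarrow> nat \<Rightarrow> 'i fa \<Rightarrow> 'i fa" where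
  "Aiter w Y c 0 p = p"
| "Aiter w Y c (Suc n) p = Aop w Y (c + 2 * int n) (Aiter w Y c n p)"

lemma Aop_add: "Aop w Y c (p + q) = Aop w Y c p + Aop w Y c q"
  by (simp add: Aop_def algebra_simps)
lemma Aop_zero: "Aop w Y c 0 = 0"
  by (simp add: Aop_def)
lemma Aop_Cs: "Aop w Y c (Cs k * p) = Cs k * Aop w Y c p"
proof -
  have "Cs (w powi c) * Y * (Cs k * p) = Cs k * (Cs (w powi c) * Y * p)"
    by (metis Cs_comm Cs_mult mult.assoc mult.commute)
  then show ?thesis by (simp add: Aop_def algebra_simps)
qed

lemma Cs_mid: "p * (Cs a * q) = Cs a * (p * q)"
proof -
  have "p * Cs a = Cs a * p" by (rule Cs_comm[symmetric])
  then show ?thesis by (metis mult.assoc)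
qed

lemma Aop_leibniz:
  assumes "w \<noteq> 0"
  shows "Aop w Y (c1 + c2) (p * z) = p * Aop w Y c2 z + Cs (w powi c2) * (Aop w Y c1 p * z)"
proof -
  have e: "Cs (w powi (c1 + c2)) = Cs (w powi c2) * Cs (w powi c1)"
    using assms by (simp add: power_int_add Cs_mult[symmetric] mult.commute)
  show ?thesis
    unfolding Aop_def e by (simp add: algebra_simps) (rule Cs_mid)
qed

lemma Aop_Poly: "Y \<in> Poly \<Longrightarrow> p \<in> Poly \<Longrightarrow> Aop w Y c p \<in> Poly"
  unfolding Aop_def by (intro Poly_diff Poly.mult Poly.Cs) auto

lemma Aiter_Poly: "Y \<in> Poly \<Longrightarrow> p \<in> Poly \<Longrightarrow> Aiter w Y c n p \<in> Poly"
  by (induction n) (auto intro: Aop_Poly)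

lemma Aop_I: "Y \<in> Poly \<Longrightarrow> p \<in> Iset B \<Longrightarrow> Aop w Y c p \<in> Iset B"
  unfolding Aop_def by (intro I_diff I_mult_right I_mult_left Poly.mult Poly.Cs) auto

lemma Aiter_I: "Y \<in> Poly \<Longrightarrow> p \<in> Iset B \<Longrightarrow> Aiter w Y c n p \<in> Iset B"
  by (induction n) (auto intro: Aop_I)

lemma Aiter_add: "Aiter w Y c (n + m) p = Aiter w Y (c + 2 * int n) m (Aiter w Y c n p)"
  by (induction m) (auto simp: algebra_simps)

inductive_set Sp :: "Qq \<Rightarrow> 'i fa \<Rightarrow> int \<Rightarrow> int \<Rightarrow> 'i fa \<Rightarrow> 'i fa \<Rightarrow> nat \<Rightarrow> 'i fa set"
  for w Y c1 c2 x z n where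
  gen: "a + b = n \<Longrightarrow> Cs k * (Aiter w Y c1 a x * Aiter w Y c2 b z) \<in> Sp w Y c1 c2 x z n"
| zero: "0 \<in> Sp w Y c1 c2 x z n"
| add: "s \<in> Sp w Y c1 c2 x z n \<Longrightarrow> t \<in> Sp w Y c1 c2 x z n \<Longrightarrow> s + t \<in> Sp w Y c1 c2 x z n"

lemma Sp_step:
  assumes "w \<noteq> 0" and "s \<in> Sp w Y c1 c2 x z n"
  shows "Aop w Y (c1 + c2 + 2 * int n) s \<in> Sp w Y c1 c2 x z (Suc n)"
  using assms(2)
proof induction
  case (gen a b k)
  have ex: "c1 + c2 + 2 * int n = (c1 + 2 * int a) + (c2 + 2 * int b)" using gen by simp
  have "Aop w Y (c1 + c2 + 2 * int n) (Cs k * (Aiter w Y c1 a x * Aiter w Y c2 b z))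
     = Cs k * (Aiter w Y c1 a x * Aiter w Y c2 (Suc b) z)
       + Cs (k * w powi (c2 + 2 * int b)) * (Aiter w Y c1 (Suc a) x * Aiter w Y c2 b z)"
    unfolding Aop_Cs ex Aop_leibniz[OF assms(1)] by (simp add: Cs_mult algebra_simps)
  also have "\<dots> \<in> Sp w Y c1 c2 x z (Suc n)"
    using gen by (intro Sp.add Sp.gen) auto
  finally show ?case .
next
  case zero then show ?case by (simp add: Aop_zero Sp.zero)
next
  case (add s t) then show ?case by (simp add: Aop_add Sp.add)
qed

lemma Aiter_mult_Sp:
  assumes "w \<noteq> 0"
  shows "Aiter w Y (c1 + c2) n (x * z) \<in> Sp w Y c1 c2 x z n"
proof (induction n)
  case 0
  have "Cs 1 * (Aiter w Y c1 0 x * Aiter w Y c2 0 z) \<in> Sp w Y c1 c2 x z 0"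
    by (rule Sp.gen) simp
  then show ?case by (simp add: Cs_one)
next
  case (Suc n)
  then show ?case using Sp_step[OF assms Suc] by (simp add: algebra_simps)
qed

lemma Sp_I:
  assumes "s \<in> Sp w Y c1 c2 x z n"
    and "\<And>a b. a + b = n \<Longrightarrow> Aiter w Y c1 a x * Aiter w Y c2 b z \<in> Iset B"
  shows "s \<in> Iset B"
  using assms by induction (auto intro: I_Cs I_zero I_add)


section \<open>q-numbers\<close>

definition qi :: "Qq \<Rightarrow> nat \<Rightarrow> Qq" where
  "qi w n = (w ^ n - inverse w ^ n) / (w - inverse w)"

definition qb :: "Qq \<Rightarrow> nat \<Rightarrow> nat \<Rightarrow> Qq" where
  "qb w n m = (\<Prod>l = 0..<m. qi w (n - l)) / (\<Prod>l = 1..m. qi w l)"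

lemma qint_eq: "qint d n = qi (qv ^ d) n"
  unfolding qint_def qi_def by (simp add: power_mult power_inverse)

lemma qbinom_eq: "qbinom d n m = qb (qv ^ d) n m"
  unfolding qbinom_def qb_def qfact_def qint_eq ..

lemma qi_0: "qi w 0 = 0" by (simp add: qi_def)

lemma qb_0: "qb w n 0 = 1" by (simp add: qb_def)

lemma qb_gt: "n < m \<Longrightarrow> qb w n m = 0"
  unfolding qb_def by (subst prod_zero_iff[THEN iffD2]) (auto simp: qi_0 intro!: bexI[of _ n])

lemma qi_split: "qi w (Suc (k + t)) = inverse w ^ Suc k * qi w t + w ^ t * qi w (Suc k)"
  unfolding qi_def by (simp add: power_add algebra_simps diff_divide_distrib add_divide_distrib)

lemma qb_pascal:
  assumes w0: "w \<noteq> 0" and nz: "\<forall>k\<ge>1. qi w k \<noteq> 0"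
  shows "qb w (Suc n) (Suc k) = w powi (- (int k + 1)) * qb w n (Suc k) + w powi (int n - int k) * qb w n k"
proof -
  define P where "P = (\<Prod>l<k. qi w (n - l))"
  define F where "F = (\<Prod>l = 1..k. qi w l)"
  have F0: "F \<noteq> 0" unfolding F_def using nz by (auto simp: prod_zero_iff)
  have Q0: "qi w (Suc k) \<noteq> 0" using nz by simp
  have FS: "(\<Prod>l = 1..Suc k. qi w l) = F * qi w (Suc k)"
    unfolding F_def by (simp add: prod.cl_ivl_Suc)
  have e1: "qb w (Suc n) (Suc k) = qi w (Suc n) * P / (F * qi w (Suc k))"
    unfolding qb_def FS P_def atLeast0LessThan prod.lessThan_Suc_shift by simp
  have e2: "qb w n (Suc k) = P * qi w (n - k) / (F * qi w (Suc k))"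
    unfolding qb_def FS P_def atLeast0LessThan prod.lessThan_Suc by simp
  have e3: "qb w n k = P / F"
    unfolding qb_def F_def P_def atLeast0LessThan by simp
  show ?thesis
  proof (cases "k \<le> n")
    case True
    then obtain t where t: "n = k + t" by (metis le_add_diff_inverse)
    have p1: "w powi (- (int k + 1)) = inverse w ^ Suc k"
    proof -
      have "- (int k + 1) = - int (Suc k)" by simp
      then have "w powi (- (int k + 1)) = w powi (- int (Suc k))" by (rule arg_cong)
      also have "\<dots> = inverse w ^ Suc k"
        by (simp only: power_int_minus power_int_of_nat power_inverse)
      finally show ?thesis .
    qed
    have p2: "w powi (int n - int k) = w ^ t"
      using t by simp
    have "qi w (Suc n) = inverse w ^ Suc k * qi w (n - k) + w ^ t * qi w (Suc k)"
      using qi_split[of w k t] t by simp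
    then show ?thesis
      unfolding e1 e2 e3 p1 p2 using F0 Q0 by (simp add: field_simps)
  next
    case False
    then have "P = 0" unfolding P_def by (auto simp: prod_zero_iff qi_0 intro!: bexI[of _ n])
    then show ?thesis unfolding e1 e2 e3 by simp
  qed
qed


lemma powi_comb: "w \<noteq> 0 \<Longrightarrow> a + b = c \<Longrightarrow> w powi a * w powi b = (w::Qq) powi c"
  using power_int_add[of w a b] by auto

definition alpha :: "Qq \<Rightarrow> int \<Rightarrow> nat \<Rightarrow> nat \<Rightarrow> Qq" where
  "alpha w c n k = (-1) ^ k * w powi (int k * (c + int n - 1)) * qb w n k"

lemma alpha_0: "alpha w c n 0 = 1"
  by (simp add: alpha_def qb_0)

lemma alpha_gt: "n < k \<Longrightarrow> alpha w c n k = 0"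
  by (simp add: alpha_def qb_gt)

lemma alpha_step:
  assumes w0: "w \<noteq> 0" and nz: "\<forall>k\<ge>1. qi w k \<noteq> 0"
  shows "alpha w c (Suc n) (Suc k) = alpha w c n (Suc k) - w powi (c + 2 * int n) * alpha w c n k"
proof -
  define E where "E = (1 + int k) * (c + int n)"
  have h1: "w powi E * w powi (- (int k + 1)) = w powi ((int k + 1) * (c + int n - 1))"
    by (rule powi_comb[OF w0]) (simp add: E_def algebra_simps)
  have "w powi E * w powi (int n - int k) = w powi (E + (int n - int k))"
    by (rule powi_comb[OF w0]) simp
  also have "\<dots> = w powi ((c + 2 * int n) + int k * (c + int n - 1))"
    by (rule arg_cong[where f="power_int w"]) (simp add: E_def algebra_simps)
  also have "\<dots> = w powi (c + 2 * int n) * w powi (int k * (c + int n - 1))"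
    by (rule powi_comb[OF w0, symmetric]) simp
  finally have h2: "w powi E * w powi (int n - int k) = w powi (c + 2 * int n) * w powi (int k * (c + int n - 1))" .
  have "alpha w c (Suc n) (Suc k) = (-1) ^ Suc k * w powi E * qb w (Suc n) (Suc k)"
    by (simp add: alpha_def E_def)
  also have "\<dots> = (-1) ^ Suc k * ((w powi E * w powi (- (int k + 1))) * qb w n (Suc k)
      + (w powi E * w powi (int n - int k)) * qb w n k)"
    unfolding qb_pascal[OF w0 nz, of n k] by algebra
  also have "\<dots> = alpha w c n (Suc k) - w powi (c + 2 * int n) * alpha w c n k"
    unfolding h1 h2 by (simp add: alpha_def algebra_simps)
  finally show ?thesis .
qed

lemma Cs_diff: "Cs (a - b) = Cs a - Cs b"
  by (metis Cs_add Cs_uminus diff_conv_add_uminus)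

lemma Aiter_closed:
  assumes w0: "w \<noteq> 0" and nz: "\<forall>k\<ge>1. qi w k \<noteq> 0"
  shows "Aiter w Y c n p = (\<Sum>k\<le>n. Cs (alpha w c n k) * (Y ^ k * p * Y ^ (n - k)))"
proof (induction n)
  case 0
  then show ?case by (simp add: alpha_0 Cs_one)
next
  case (Suc n)
  define f where "f k = Cs (alpha w c n k) * (Y ^ k * p * Y ^ (Suc n - k))" for k
  define g where "g k = Cs (w powi (c + 2 * int n) * alpha w c n k) * (Y ^ Suc k * p * Y ^ (Suc n - Suc k))" for k
  have sY: "(\<Sum>k\<le>n. Cs (alpha w c n k) * (Y ^ k * p * Y ^ (n - k))) * Y = (\<Sum>k\<le>n. f k)"
    unfolding sum_distrib_right f_def
    by (intro sum.cong refl) (simp add: mult.assoc Suc_diff_le power_Suc2[symmetric])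
  have Ys: "Cs (w powi (c + 2 * int n)) * Y * (\<Sum>k\<le>n. Cs (alpha w c n k) * (Y ^ k * p * Y ^ (n - k))) = (\<Sum>k\<le>n. g k)"
    unfolding sum_distrib_left g_def
  proof (intro sum.cong refl)
    fix k assume "k \<in> {..n}"
    have "Y * (Cs (alpha w c n k) * (Y ^ k * p * Y ^ (n - k))) = Cs (alpha w c n k) * (Y ^ Suc k * p * Y ^ (n - k))"
      by (simp add: Cs_mid mult.assoc)
    then show "Cs (w powi (c + 2 * int n)) * Y * (Cs (alpha w c n k) * (Y ^ k * p * Y ^ (n - k))) =
         Cs (w powi (c + 2 * int n) * alpha w c n k) * (Y ^ Suc k * p * Y ^ (Suc n - Suc k))"
      by (simp add: Cs_mult mult.assoc)
  qed
  define h where "h k = Cs (alpha w c (Suc n) k) * (Y ^ k * p * Y ^ (Suc n - k))" for k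
  have fS: "f (Suc n) = 0" by (simp add: f_def alpha_gt Cs_zero)
  have "(\<Sum>k\<le>n. f k) = (\<Sum>k\<le>Suc n. f k)" by (simp add: fS)
  also have "\<dots> = f 0 + (\<Sum>k\<le>n. f (Suc k))" by (rule sum.atMost_Suc_shift)
  finally have sf: "(\<Sum>k\<le>n. f k) = f 0 + (\<Sum>k\<le>n. f (Suc k))" .
  have "Aiter w Y c (Suc n) p = (\<Sum>k\<le>n. f k) - (\<Sum>k\<le>n. g k)"
    by (simp add: Suc Aop_def sY Ys)
  also have "\<dots> = f 0 + (\<Sum>k\<le>n. f (Suc k) - g k)"
    by (simp add: sf sum_subtractf)
  also have "\<dots> = h 0 + (\<Sum>k\<le>n. h (Suc k))"
  proof -
    have "f 0 = h 0" by (simp add: f_def h_def alpha_0)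
    moreover have "f (Suc k) - g k = h (Suc k)" for k
      by (simp add: f_def g_def h_def alpha_step[OF w0 nz] Cs_diff left_diff_distrib)
    ultimately show ?thesis by simp
  qed
  also have "\<dots> = (\<Sum>k\<le>Suc n. h k)"
    by (rule sum.atMost_Suc_shift[symmetric])
  finally show ?case by (simp add: h_def)
qed



lemma qv_pow: "qv ^ m = Fract ([:0, 1:] ^ m) 1"
  by (induction m) (simp_all add: qv_def mult_fract One_fract_def)

lemma qv_pow_ne1: "m \<ge> 1 \<Longrightarrow> qv ^ m \<noteq> 1"
proof
  assume m: "m \<ge> 1" and "qv ^ m = 1"
  then have "(Fract ([:0, 1:] ^ m) 1 :: Qq) = Fract 1 1" by (metis qv_pow One_fract_def)
  then have "([:0, 1:] ^ m :: rat poly) = 1" by (simp add: eq_fract)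
  then have "degree ([:0, 1:] ^ m :: rat poly) = 0" by simp
  with m show False by (simp add: degree_linear_power)
qed

lemma qv_ne0: "qv \<noteq> 0"
  unfolding qv_def by (simp add: Zero_fract_def eq_fract)

lemma w_props:
  assumes d: "d \<ge> 1"
  shows "qv ^ d \<noteq> 0" and "\<forall>k\<ge>1. qi (qv ^ d) k \<noteq> 0"
proof -
  show w0: "qv ^ d \<noteq> 0" using qv_ne0 by simp
  have ne: "(qv ^ d) ^ k \<noteq> inverse (qv ^ d) ^ k" if k: "k \<ge> 1" for k
  proof
    assume "(qv ^ d) ^ k = inverse (qv ^ d) ^ k"
    then have "(qv ^ d) ^ k * (qv ^ d) ^ k = inverse (qv ^ d) ^ k * (qv ^ d) ^ k" by simp
    also have "\<dots> = (inverse (qv ^ d) * qv ^ d) ^ k" by (simp only: power_mult_distrib)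
    also have "\<dots> = 1" using w0 by simp
    finally have "qv ^ (d * k + d * k) = 1" by (simp add: power_add power_mult)
    moreover have "d * k + d * k \<ge> 1" using d k by (simp add: Suc_le_eq)
    ultimately show False using qv_pow_ne1 by blast
  qed
  show "\<forall>k\<ge>1. qi (qv ^ d) k \<noteq> 0"
    using ne[of 1] ne by (auto simp: qi_def)
qed

lemma Wd_replicate: "Wd (replicate k i) = Wd [i] ^ k"
proof (induction k)
  case 0 then show ?case by (simp add: Wd_Nil)
next
  case (Suc k)
  have "Wd (replicate (Suc k) i) = Wd ([i] @ replicate k i)" by simp
  also have "\<dots> = Wd [i] * Wd (replicate k i)" by (rule Wd_append)
  finally show ?case using Suc by simp
qed

lemma serre_form:
  assumes d: "d \<ge> 1" and c: "c + int n - 1 = 0"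
  shows "rep (Aiter (qv ^ d) (Wd [i]) c n (Wd u)) =
    (\<Sum>k = 0..n. smult_ncp ((-1) ^ k * qbinom d n k) (mon (replicate k i @ u @ replicate (n - k) i)))"
proof -
  have "Aiter (qv ^ d) (Wd [i]) c n (Wd u) =
      (\<Sum>k\<le>n. Cs (alpha (qv ^ d) c n k) * (Wd [i] ^ k * Wd u * Wd [i] ^ (n - k)))"
    by (rule Aiter_closed[OF w_props[OF d]])
  also have "\<dots> = (\<Sum>k\<le>n. Cs ((-1) ^ k * qbinom d n k) * Wd (replicate k i @ u @ replicate (n - k) i))"
  proof (intro sum.cong refl)
    fix k
    have e: "int k * (c + int n - 1) = 0" using c by simp
    have "alpha (qv ^ d) c n k = (-1) ^ k * qbinom d n k"
      unfolding alpha_def qbinom_eq e by (simp only: power_int_0_right mult_1_right)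
    moreover have "Wd [i] ^ k * Wd u * Wd [i] ^ (n - k) = Wd (replicate k i @ u @ replicate (n - k) i)"
      by (simp only: Wd_append Wd_replicate mult.assoc)
    ultimately show "Cs (alpha (qv ^ d) c n k) * (Wd [i] ^ k * Wd u * Wd [i] ^ (n - k)) =
        Cs ((-1) ^ k * qbinom d n k) * Wd (replicate k i @ u @ replicate (n - k) i)" by simp
  qed
  finally show ?thesis
    by (simp add: rep_sum rep_Cs_mult rep_Wd atLeast0AtMost)
qed

lemma Aiter_zero: "Aiter w Y c n 0 = 0"
  by (induction n) (auto simp: Aop_zero)

lemma Aiter_one: "n \<ge> 1 \<Longrightarrow> Aiter w Y 0 n 1 = 0"
proof -
  assume "n \<ge> 1"
  then obtain t where t: "n = 1 + t" by (metis le_add_diff_inverse)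
  have "Aiter w Y 0 1 1 = 0" by (simp add: Aop_def Cs_one)
  then show ?thesis unfolding t Aiter_add by (simp add: Aiter_zero)
qed

lemma main_induct:
  assumes w0: "w \<noteq> 0" and Y: "Y \<in> Poly"
  shows "(\<And>j p. j \<in> set js \<Longrightarrow> p \<ge> s + 1 \<Longrightarrow> Aiter w Y a p (Wd [j]) \<in> Iset B) \<Longrightarrow>
    p \<ge> length js * s + 1 \<Longrightarrow> Aiter w Y (int (length js) * a) p (Wd js) \<in> Iset B"
proof (induction js arbitrary: p)
  case Nil
  have "Aiter w Y 0 p 1 = 0" using Nil.prems(2) by (intro Aiter_one) simp
  then show ?case by (simp add: Wd_Nil I_zero)
next
  case (Cons j js)
  have hj1: "Aiter w Y a q (Wd [j]) \<in> Iset B" if "q \<ge> s + 1" for q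
    using Cons.prems(1)[of j q] that by simp
  have IH: "Aiter w Y (int (length js) * a) q (Wd js) \<in> Iset B" if "q \<ge> length js * s + 1" for q
  proof (rule Cons.IH)
    show "q \<ge> length js * s + 1" by (rule that)
    fix j' q' assume "j' \<in> set js" "q' \<ge> s + 1"
    then show "Aiter w Y a q' (Wd [j']) \<in> Iset B" using Cons.prems(1)[of j' q'] by simp
  qed
  have eq: "Aiter w Y (int (length (j # js)) * a) p (Wd (j # js))
      = Aiter w Y (a + int (length js) * a) p (Wd [j] * Wd js)"
  proof -
    have "int (length (j # js)) * a = a + int (length js) * a" by (simp add: algebra_simps)
    moreover have "Wd (j # js) = Wd [j] * Wd js" using Wd_append[of "[j]" js] by simp
    ultimately show ?thesis by simp
  qed
  show ?case unfolding eq
  proof (rule Sp_I[OF Aiter_mult_Sp[OF w0]])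
    fix a' b assume ab: "a' + b = p"
    show "Aiter w Y a a' (Wd [j]) * Aiter w Y (int (length js) * a) b (Wd js) \<in> Iset B"
    proof (cases "a' \<ge> s + 1")
      case True
      show ?thesis by (rule I_mult_right[OF Aiter_Poly[OF Y Poly.Wd] hj1[OF True]])
    next
      case False
      then have "b \<ge> length js * s + 1" using ab Cons.prems(2) by simp
      show ?thesis by (rule I_mult_left[OF Aiter_Poly[OF Y Poly.Wd] IH]) fact
    qed
  qed
qed


theorem proposition5p13:
  fixes B :: "'i::finite \<Rightarrow> 'i \<Rightarrow> int" and \<sigma> :: "'i \<Rightarrow> 'i"
    and \<eta> \<eta>' :: "'i set" and i :: 'i and js :: "'i list"
  assumes "cartan_datum B"
    and "admissible_aut B \<sigma>"
    and "\<eta> \<in> sorbits \<sigma>" and "\<eta>' \<in> sorbits \<sigma>" and "\<eta> \<noteq> \<eta>'"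
    and "\<eta> = {i}"
    and "\<forall>j\<in>\<eta>'. cartan_a B i j \<noteq> 0"
    and "\<forall>j\<in>\<eta>'. \<forall>j'\<in>\<eta>'. cartan_a B i j = cartan_a B i j'"
    and "distinct js" and "set js = \<eta>'"
  shows "zero_in_Uminus B
           (\<Sum>k = 0..nat (1 - a1 B \<eta> \<eta>').
              smult_ncp ((-1) ^ k * qbinom (nat (d1 B \<eta>)) (nat (1 - a1 B \<eta> \<eta>')) k)
                (mon (replicate k i @ js @ replicate (nat (1 - a1 B \<eta> \<eta>') - k) i)))"
proof -
  note cd = assms(1)[unfolded cartan_datum_def]
  have Bii: "B i i > 0" "even (B i i)" using cd by auto
  have off: "B i j \<le> 0" "B i i dvd 2 * B i j" if "i \<noteq> j" for j using cd that by auto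
  define d where "d = nat (cartan_d B i)"
  have d1: "d \<ge> 1"
  proof -
    from Bii obtain t where "B i i = 2 * t" by (auto elim: evenE)
    with Bii show ?thesis by (simp add: d_def cartan_d_def)
  qed
  have d1eq: "nat (d1 B \<eta>) = d"
    by (simp add: d1_def B1_def assms(6) d_def cartan_d_def)
  have bij: "bij \<sigma>" using assms(2) by (simp add: admissible_aut_def)
  obtain i0 where i0: "\<eta> = sorbit \<sigma> i0" using assms(3) by (auto simp: sorbits_def)
  have "i0 \<in> sorbit \<sigma> i0" unfolding sorbit_def by (auto intro: exI[of _ 0])
  then have "i0 = i" using i0 assms(6) by auto
  have "\<sigma> i0 \<in> sorbit \<sigma> i0" unfolding sorbit_def by (auto intro: exI[of _ 1])
  then have si: "\<sigma> i = i" using i0 assms(6) \<open>i0 = i\<close> by auto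
  have fix_i: "(\<sigma> ^^ k) i = i" for k by (induction k) (auto simp: si)
  obtain j0 where j0: "\<eta>' = sorbit \<sigma> j0" using assms(4) by (auto simp: sorbits_def)
  have j0in: "j0 \<in> \<eta>'" unfolding j0 sorbit_def by (auto intro: exI[of _ 0])
  have i_notin: "i \<notin> \<eta>'"
  proof
    assume "i \<in> \<eta>'"
    then obtain k where k: "i = (\<sigma> ^^ k) j0" unfolding j0 sorbit_def by auto
    have "inj (\<sigma> ^^ k)" using bij by (intro inj_fn) (simp add: bij_is_inj)
    moreover have "(\<sigma> ^^ k) j0 = (\<sigma> ^^ k) i" by (metis k fix_i)
    ultimately have "j0 = i" by (metis injD)
    then have "\<eta>' = sorbit \<sigma> i" using j0 by simp
    moreover have "\<eta> = sorbit \<sigma> i" using i0 \<open>i0 = i\<close> by simp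
    ultimately show False using assms(5) by simp
  qed
  define a where "a = cartan_a B i j0"
  have ha: "cartan_a B i j = a" if "j \<in> \<eta>'" for j using assms(8) that j0in unfolding a_def by blast
  have ij: "i \<noteq> j" if "j \<in> \<eta>'" for j using i_notin that by auto
  have a_le: "a \<le> 0"
  proof -
    have "2 * B i j0 \<le> 0" using off(1)[OF ij[OF j0in]] by simp
    then have "(2 * B i j0) div B i i \<le> 0 div B i i" using Bii(1) by (rule zdiv_mono1)
    then show ?thesis unfolding a_def cartan_a_def by simp
  qed
  have two_B: "2 * B i j = a * B i i" if "j \<in> \<eta>'" for j
  proof -
    have "2 * B i j = (2 * B i j div B i i) * B i i" using off(2)[OF ij[OF that]] by simp
    also have "\<dots> = a * B i i" using ha[OF that] by (simp add: cartan_a_def)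
    finally show ?thesis .
  qed
  define m where "m = length js"
  have card: "card \<eta>' = m" using assms(9,10) distinct_card m_def by metis
  have a1eq: "a1 B \<eta> \<eta>' = int m * a"
  proof -
    have "B1 B \<eta> \<eta>' = (\<Sum>j\<in>\<eta>'. B i j)" using assms(5,6) by (simp add: B1_def)
    then have "2 * B1 B \<eta> \<eta>' = (\<Sum>j\<in>\<eta>'. 2 * B i j)" by (simp add: sum_distrib_left)
    also have "\<dots> = (\<Sum>j\<in>\<eta>'. a * B i i)" by (rule sum.cong) (auto simp: two_B)
    also have "\<dots> = (int m * a) * B i i" using card by simp
    finally have "2 * B1 B \<eta> \<eta>' = (int m * a) * B i i" .
    moreover have "B1 B \<eta> \<eta> = B i i" by (simp add: B1_def assms(6))
    ultimately show ?thesis using Bii(1) by (simp add: a1_def)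
  qed
  define s where "s = nat (- a)"
  have as: "a = - int s" using a_le by (simp add: s_def)
  define N where "N = nat (1 - a1 B \<eta> \<eta>')"
  have N: "N = m * s + 1"
  proof -
    have "1 - int m * - int s = int (m * s + 1)" by simp
    then show ?thesis unfolding N_def a1eq as by (simp only: nat_int)
  qed
  have w: "qv ^ d \<noteq> 0" using w_props[OF d1] by simp
  have Y: "Wd [i] \<in> Poly" by (rule Poly.Wd)
  have hj: "Aiter (qv ^ d) (Wd [i]) a p (Wd [j]) \<in> Iset B" if j: "j \<in> set js" and p: "p \<ge> s + 1" for j p
  proof -
    have jin: "j \<in> \<eta>'" using j assms(10) by simp
    have "rep (Aiter (qv ^ d) (Wd [i]) a (s + 1) (Wd [j])) = serre_elem B i j"
    proof -
      have n1: "nat (1 - cartan_a B i j) = s + 1" using ha[OF jin] as by simp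
      have "rep (Aiter (qv ^ d) (Wd [i]) a (s + 1) (Wd [j])) =
          (\<Sum>k = 0..s + 1. smult_ncp ((-1) ^ k * qbinom d (s + 1) k) (mon (replicate k i @ [j] @ replicate (s + 1 - k) i)))"
        by (rule serre_form[OF d1]) (simp add: as)
      then show ?thesis unfolding serre_elem_def Let_def n1 d_def by simp
    qed
    then have base: "Aiter (qv ^ d) (Wd [i]) a (s + 1) (Wd [j]) \<in> Iset B"
      unfolding Iset_def using serre_ideal.gen[OF ij[OF jin], of B] by simp
    obtain t where t: "p = (s + 1) + t" using p by (metis le_add_diff_inverse)
    have "Aiter (qv ^ d) (Wd [i]) a ((s + 1) + t) (Wd [j]) =
        Aiter (qv ^ d) (Wd [i]) (a + 2 * int (s + 1)) t (Aiter (qv ^ d) (Wd [i]) a (s + 1) (Wd [j]))"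
      by (rule Aiter_add)
    then show ?thesis unfolding t using Aiter_I[OF Y base] by simp
  qed
  have main: "Aiter (qv ^ d) (Wd [i]) (int m * a) N (Wd js) \<in> Iset B"
    using main_induct[OF w Y, of js s a B N] hj N by (simp add: m_def)
  have "rep (Aiter (qv ^ d) (Wd [i]) (int m * a) N (Wd js)) =
      (\<Sum>k = 0..N. smult_ncp ((-1) ^ k * qbinom d N k) (mon (replicate k i @ js @ replicate (N - k) i)))"
    by (rule serre_form[OF d1]) (simp add: N as)
  with main show ?thesis
    unfolding zero_in_Uminus_def d1eq N_def[symmetric] Iset_def by simp
qed

end
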